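(* Fix $0<s\le1$ and let $\rho(s):=e^s/s$. Suppose that for some $\chi$, $G$ is a tight $(\rho(s),\chi)$-bidding profile induced by an integrable function $\phi:(0,1]\to[1,\infty)$. Then \[ \chi\ge e^s\int_0^1 e^{-sx}\phi(x)\,\mathrm{d} x . \]
   Context: Given $1<\chi\le\rho$, a $(\rho,\chi)$-bidding profile is a non-decreasing, left-continuous $G:\mathbb{R}\to(0,\infty)$ with (offset) $G(x)<1$ for $x<0$ and $G(x)\ge1$ for $x>0$; (robustness) $\int_{-\infty}^{x+1}G(t)\,\mathrm{d} t\le\rho G(x)$ for all $x\in\mathbb{R}$; (consistency) $\int_{-\infty}^1G(t)\,\mathrm{d} t\le\chi$. It is tight if additionally $\int_{-\infty}^{x+1}G(t)\,\mathrm{d} t=\rho G(x)$ for all $x\le0$ and $\int_{-\infty}^1G(t)\,\mathrm{d} t=\chi$. It is induced by $\phi:(0,1]\to[1,\infty)$ if $G|_{(0,1]}\equiv\phi$. *)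

theory Defs
  imports "HOL-Analysis.Analysis"
begin

definition lower_int :: "(real \<Rightarrow> real) \<Rightarrow> real \<Rightarrow> ennreal" where
  "lower_int G a = (\<integral>\<^sup>+ t. ennreal (G t) * indicator {..a} t \<partial>lborel)"

definition bidding_profile :: "real \<Rightarrow> real \<Rightarrow> (real \<Rightarrow> real) \<Rightarrow> bool" where
  "bidding_profile \<rho> chi G \<longleftrightarrow>
     1 < chi \<and> chi \<le> \<rho> \<and>
     mono G \<and> (\<forall>x. continuous (at_left x) G) \<and> (\<forall>x. 0 < G x) \<and>
     (\<forall>x<0. G x < 1) \<and> (\<forall>x>0. 1 \<le> G x) \<and>
     (\<forall>x. lower_int G (x + 1) \<le> ennreal (\<rho> * G x)) \<and>
     lower_int G 1 \<le> ennreal chi"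

definition tight_bidding_profile :: "real \<Rightarrow> real \<Rightarrow> (real \<Rightarrow> real) \<Rightarrow> bool" where
  "tight_bidding_profile \<rho> chi G \<longleftrightarrow>
     bidding_profile \<rho> chi G \<and>
     (\<forall>x\<le>0. lower_int G (x + 1) = ennreal (\<rho> * G x)) \<and>
     lower_int G 1 = ennreal chi"

definition induced_by :: "(real \<Rightarrow> real) \<Rightarrow> (real \<Rightarrow> real) \<Rightarrow> bool" where
  "induced_by G \<phi> \<longleftrightarrow> (\<forall>x\<in>{0<..1}. G x = \<phi> x)"

end

theory Submission
  imports Defs
begin

lemma key_contra:
  fixes u :: "real \<Rightarrow> real" and s c :: real
  assumes s: "0 < s" "s \<le> 1"
    and cont: "\<And>L. continuous_on {L..1} u"
    and nn: "\<And>x. x \<le> 1 \<Longrightarrow> 0 \<le> u x"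
    and rel: "\<And>t. t \<le> 0 \<Longrightarrow> s * integral {t..t+1} u = u t + c"
  shows "c \<le> 0"
proof (rule ccontr)
  assume "\<not> c \<le> 0"
  hence c: "c > 0" by simp
  have "compact (u ` {0..1})"
    by (rule compact_continuous_image) (auto intro: continuous_on_subset[OF cont[of 0]])
  then obtain B0 where B0: "\<And>x. x \<in> {0..1} \<Longrightarrow> u x \<le> B0"
    using compact_attains_sup[of "u ` {0..1}"] by fastforce
  define B where "B = max B0 0"
  have B: "\<And>x. x \<in> {0..1} \<Longrightarrow> u x \<le> B" "B \<ge> 0"
    using B0 unfolding B_def by (auto intro: max.coboundedI1)
  define t0 where "t0 = -2*B/c - 1"
  have "2*B/c \<ge> 0" using B c by simp
  hence t0: "t0 \<le> -1" by (simp add: t0_def)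
  define g where "g x = u x - (c/2) * x" for x
  have contg: "continuous_on {t0..1} g"
    unfolding g_def
    by (intro continuous_intros continuous_on_subset[OF cont[of t0]]) auto
  obtain ts where ts: "ts \<in> {t0..1}" "\<And>y. y \<in> {t0..1} \<Longrightarrow> g y \<le> g ts"
    using continuous_attains_sup[OF compact_Icc _ contg] t0 by fastforce
  have "ts > 0"
  proof (rule ccontr)
    assume "\<not> ts > 0"
    hence ts0: "ts \<le> 0" by simp
    have bnd: "u x \<le> u ts + c/2" if "x \<in> {ts..ts+1}" for x
    proof -
      have "g x \<le> g ts" using ts that ts0 by auto
      hence "u x - (c/2)*x \<le> u ts - (c/2)*ts" by (simp add: g_def)
      moreover have "(c/2)*(x-ts) = (c/2)*x - (c/2)*ts" by (simp add: right_diff_distrib)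
      ultimately have "u x \<le> u ts + (c/2) * (x - ts)" by linarith
      also have "\<dots> \<le> u ts + c/2" using that c by (intro add_left_mono mult_left_le) auto
      finally show ?thesis .
    qed
    have intu: "u integrable_on {ts..ts+1}"
      by (rule integrable_continuous_interval, rule continuous_on_subset[OF cont[of ts]]) (use ts0 in auto)
    have "integral {ts..ts+1} u \<le> integral {ts..ts+1} (\<lambda>x. u ts + c/2)"
      by (rule integral_le[OF intu]) (use bnd in auto)
    also have "\<dots> = u ts + c/2" by simp
    finally have i1: "integral {ts..ts+1} u \<le> u ts + c/2" .
    have i0: "0 \<le> integral {ts..ts+1} u"
      by (rule integral_nonneg[OF intu]) (use ts0 nn in auto)
    have "u ts + c = s * integral {ts..ts+1} u" using rel ts0 by simp
    also have "\<dots> \<le> integral {ts..ts+1} u" using i0 s by (simp add: mult_left_le_one_le)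
    finally show False using i1 c by simp
  qed
  hence "u ts \<le> B" "0 \<le> c/2*ts" using ts B c by auto
  hence "g ts \<le> B" unfolding g_def by linarith
  moreover have "g t0 \<le> g ts" using ts t0 by auto
  ultimately have "u t0 \<le> B + (c/2) * t0" by (simp add: g_def)
  also have "\<dots> = - c/2" using c unfolding t0_def by (simp add: algebra_simps)
  finally show False using nn[of t0] t0 c by simp
qed

lemma nnG:
  fixes G :: "real \<Rightarrow> real"
  assumes "mono G" "\<And>x. 0 \<le> G x" "a \<le> b"
  shows "(\<integral>\<^sup>+t. ennreal (G t) * indicator {a<..b} t \<partial>lborel) = ennreal (integral {a..b} G)"
proof -
  have "G integrable_on {a..b}"
    by (rule integrable_on_mono_on) (use assms(1) in \<open>auto simp: mono_def mono_on_def\<close>)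
  hence "(G has_integral integral {a..b} G) {a..b}" by blast
  moreover have "(G has_integral integral {a..b} G) {a..b} \<longleftrightarrow> (G has_integral integral {a..b} G) {a<..b}"
    by (rule has_integral_spike_set_eq; rule negligible_subset[of "{a}"]) auto
  ultimately have "(G has_integral integral {a..b} G) {a<..b}" by simp
  thus ?thesis by (intro nn_integral_has_integral_lebesgue') (use assms in auto)
qed

lemma fub:
  fixes G :: "real \<Rightarrow> real" and s :: real
  assumes mono: "mono G" and nn: "\<And>x. 0 \<le> G x" and s: "0 < s"
  shows "(\<integral>\<^sup>+x. ennreal (exp (-s*x) * G x) * indicator {0<..1} x \<partial>lborel)
     = ennreal (integral {0..1} (\<lambda>x. s * exp (-s*x) * integral {0..x} G) + exp (-s) * integral {0..1} G)"
proof -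
  have Gm[measurable]: "G \<in> borel_measurable borel" using mono by (rule borel_measurable_mono)
  define \<Phi> where "\<Phi> x = integral {0..x} G" for x
  define S where "S = {p::real\<times>real. 0 \<le> fst p \<and> fst p \<le> 1 \<and> 0 < snd p \<and> snd p \<le> fst p}"
  have Sm[measurable]: "S \<in> sets (lborel \<Otimes>\<^sub>M lborel)"
  proof -
    have "Measurable.pred (lborel \<Otimes>\<^sub>M lborel) (\<lambda>p::real\<times>real. 0 \<le> fst p \<and> fst p \<le> 1 \<and> 0 < snd p \<and> snd p \<le> fst p)"
      by measurable
    thus ?thesis unfolding pred_def S_def by (simp add: space_pair_measure)
  qed
  define F where "F x t = ennreal (s * exp (-s*x) * G t) * indicator S (x,t)" for x t
  have Fm: "case_prod F \<in> borel_measurable (lborel \<Otimes>\<^sub>M lborel)"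
    unfolding F_def by measurable
  have Phi_nn: "0 \<le> \<Phi> x" if "0 \<le> x" for x
    unfolding \<Phi>_def
    by (rule integral_nonneg) (use nn integrable_on_mono_on mono in \<open>auto simp: mono_def mono_on_def\<close>)
  have inner_t: "(\<integral>\<^sup>+t. F x t \<partial>lborel) = ennreal (s * exp (-s*x) * \<Phi> x) * indicator {0..1} x" for x
  proof (cases "x \<in> {0..1}")
    case True
    have "(\<integral>\<^sup>+t. F x t \<partial>lborel) = (\<integral>\<^sup>+t. ennreal (s * exp (-s*x)) * (ennreal (G t) * indicator {0<..x} t) \<partial>lborel)"
      using True s nn by (intro nn_integral_cong) (auto simp: F_def S_def ennreal_mult indicator_def)
    also have "\<dots> = ennreal (s * exp (-s*x)) * (\<integral>\<^sup>+t. ennreal (G t) * indicator {0<..x} t \<partial>lborel)"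
      by (rule nn_integral_cmult) measurable
    also have "\<dots> = ennreal (s * exp (-s*x)) * ennreal (\<Phi> x)"
      using nnG[OF mono nn, of 0 x] True by (simp add: \<Phi>_def)
    finally show ?thesis using True s Phi_nn[of x] by (simp add: ennreal_mult)
  next
    case False
    hence "F x t = 0" for t by (auto simp: F_def S_def)
    thus ?thesis using False by simp
  qed
  have inner_x: "(\<integral>\<^sup>+x. F x t \<partial>lborel) = ennreal (G t * (exp (-s*t) - exp (-s))) * indicator {0<..1} t" for t
  proof (cases "t \<in> {0<..1}")
    case True
    have "(\<integral>\<^sup>+x. F x t \<partial>lborel) = (\<integral>\<^sup>+x. ennreal (G t) * (ennreal (s * exp (-s*x)) * indicator {t..1} x) \<partial>lborel)"
      using True s nn by (intro nn_integral_cong) (auto simp: F_def S_def ennreal_mult indicator_def mult_ac)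
    also have "\<dots> = ennreal (G t) * (\<integral>\<^sup>+x. ennreal (s * exp (-s*x)) * indicator {t..1} x \<partial>lborel)"
      by (rule nn_integral_cmult) measurable
    also have "(\<integral>\<^sup>+x. ennreal (s * exp (-s*x)) * indicator {t..1} x \<partial>lborel) = ennreal (exp (-s*t) - exp (-s))"
    proof (rule nn_integral_has_integral_lebesgue')
      show "0 \<le> s * exp (-s*x)" for x using s by simp
      have "((\<lambda>x. s * exp (-s*x)) has_integral ((\<lambda>x. - exp (-s*x)) 1 - (\<lambda>x. - exp (-s*x)) t)) {t..1}"
        by (rule fundamental_theorem_of_calculus) 
           (use True in \<open>auto intro!: derivative_eq_intros simp: has_real_derivative_iff_has_vector_derivative[symmetric]\<close>)
      thus "((\<lambda>x. s * exp (-s*x)) has_integral (exp (-s*t) - exp (-s))) {t..1}" by simp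
    qed
    finally show ?thesis using True nn[of t] s by (simp add: ennreal_mult)
  next
    case False
    hence "F x t = 0" for x by (auto simp: F_def S_def)
    thus ?thesis using False by simp
  qed
  have "(\<integral>\<^sup>+t. (\<integral>\<^sup>+x. F x t \<partial>lborel) \<partial>lborel) = (\<integral>\<^sup>+x. (\<integral>\<^sup>+t. F x t \<partial>lborel) \<partial>lborel)"
    by (rule lborel_pair.Fubini'[OF Fm])
  hence eq1: "(\<integral>\<^sup>+t. ennreal (G t * (exp (-s*t) - exp (-s))) * indicator {0<..1} t \<partial>lborel)
      = (\<integral>\<^sup>+x. ennreal (s * exp (-s*x) * \<Phi> x) * indicator {0..1} x \<partial>lborel)"
    by (simp add: inner_t inner_x)
  have contPhi: "continuous_on {0..1} \<Phi>"
    unfolding \<Phi>_def by (rule indefinite_integral_continuous_1, rule integrable_on_mono_on)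
      (use mono in \<open>auto simp: mono_def mono_on_def\<close>)
  have intP: "(\<lambda>x. s * exp (-s*x) * \<Phi> x) integrable_on {0..1}"
    by (rule integrable_continuous_interval) (intro continuous_intros contPhi)
  have intP0: "0 \<le> integral {0..1} (\<lambda>x. s * exp (-s*x) * \<Phi> x)"
    by (rule integral_nonneg[OF intP]) (use s Phi_nn in auto)
  have "(\<integral>\<^sup>+x. ennreal (s * exp (-s*x) * \<Phi> x) * indicator {0..1} x \<partial>lborel)
      = ennreal (integral {0..1} (\<lambda>x. s * exp (-s*x) * \<Phi> x))"
  proof (rule nn_integral_has_integral_lebesgue')
    show "0 \<le> s * exp (-s*x) * \<Phi> x" if "x \<in> {0..1}" for x using s Phi_nn[of x] that by simp
    have "(\<lambda>x. s * exp (-s*x) * \<Phi> x) integrable_on {0..1}"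
      by (rule integrable_continuous_interval) (intro continuous_intros contPhi)
    thus "((\<lambda>x. s * exp (-s*x) * \<Phi> x) has_integral integral {0..1} (\<lambda>x. s * exp (-s*x) * \<Phi> x)) {0..1}"
      by blast
  qed
  note eq2 = eq1[unfolded this]
  have pw: "ennreal (exp (-s*x) * G x) * indicator {0<..1} x
      = ennreal (G x * (exp (-s*x) - exp (-s))) * indicator {0<..1} x + ennreal (exp (-s)) * (ennreal (G x) * indicator {0<..1} x)" for x
  proof (cases "x \<in> {0<..1}")
    case True
    have "exp (-s) \<le> exp (-s*x)" using True s by (auto intro: mult_left_le)
    hence "0 \<le> G x * (exp (-s*x) - exp (-s))" using nn[of x] by simp
    hence "ennreal (exp (-s*x) * G x) = ennreal (G x * (exp (-s*x) - exp (-s))) + ennreal (exp (-s) * G x)"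
      using nn[of x] by (subst ennreal_plus[symmetric]) (auto simp: algebra_simps)
    thus ?thesis using True nn[of x] by (simp add: ennreal_mult)
  qed simp
  have "(\<integral>\<^sup>+x. ennreal (exp (-s*x) * G x) * indicator {0<..1} x \<partial>lborel)
     = (\<integral>\<^sup>+t. ennreal (G t * (exp (-s*t) - exp (-s))) * indicator {0<..1} t \<partial>lborel)
       + ennreal (exp (-s)) * (\<integral>\<^sup>+x. ennreal (G x) * indicator {0<..1} x \<partial>lborel)"
    unfolding pw by (subst nn_integral_add) (auto simp: nn_integral_cmult)
  also have "\<dots> = ennreal (integral {0..1} (\<lambda>x. s * exp (-s*x) * \<Phi> x)) + ennreal (exp (-s)) * ennreal (\<Phi> 1)"
    unfolding eq2 using nnG[OF mono nn, of 0 1] by (simp add: \<Phi>_def)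
  also have "\<dots> = ennreal (integral {0..1} (\<lambda>x. s * exp (-s*x) * \<Phi> x) + exp (-s) * \<Phi> 1)"
    using Phi_nn[of 1] s intP0
    by (simp add: ennreal_mult[symmetric] ennreal_plus)
  finally show ?thesis by (simp add: \<Phi>_def)
qed

theorem lemma8:
  fixes s chi :: real and G \<phi> :: "real \<Rightarrow> real"
  assumes "0 < s" "s \<le> 1"
    and "\<forall>x\<in>{0<..1}. 1 \<le> \<phi> x"
    and "set_integrable lborel {0<..1} \<phi>"
    and "tight_bidding_profile (exp s / s) chi G"
    and "induced_by G \<phi>"
  shows "chi \<ge> exp s * (LINT x:{0<..1}|lborel. exp (- s * x) * \<phi> x)"
proof -
  have s: "0 < s" "s \<le> 1" using assms(1,2) by auto
  have mono: "mono G" and Gpos: "\<And>x. 0 < G x" and chi1: "1 < chi"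
    and tight: "\<And>x. x \<le> 0 \<Longrightarrow> lower_int G (x + 1) = ennreal (exp s / s * G x)"
    and chiE: "lower_int G 1 = ennreal chi"
    using assms(5) unfolding tight_bidding_profile_def bidding_profile_def by auto
  have ind: "\<And>x. x \<in> {0<..1} \<Longrightarrow> G x = \<phi> x" using assms(6) unfolding induced_by_def by auto
  have nn: "\<And>x. 0 \<le> G x" using Gpos less_imp_le by blast
  have Gm[measurable]: "G \<in> borel_measurable borel" using mono by (rule borel_measurable_mono)
  have intG: "G integrable_on {a..b}" for a b
    by (rule integrable_on_mono_on) (use mono in \<open>auto simp: mono_def mono_on_def\<close>)
  have intG0: "0 \<le> integral {a..b} G" for a b
    by (rule integral_nonneg[OF intG]) (use nn in auto)
  have A: "lower_int G b = lower_int G a + ennreal (integral {a..b} G)" if "a \<le> b" for a b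
  proof -
    have pw: "ennreal (G t) * indicator {..b} t = ennreal (G t) * indicator {..a} t + ennreal (G t) * indicator {a<..b} t" for t
      using that by (auto simp: indicator_def)
    have "lower_int G b = (\<integral>\<^sup>+t. ennreal (G t) * indicator {..a} t \<partial>lborel) + (\<integral>\<^sup>+t. ennreal (G t) * indicator {a<..b} t \<partial>lborel)"
      unfolding lower_int_def pw by (rule nn_integral_add) auto
    thus ?thesis unfolding lower_int_def using nnG[OF mono nn that] by simp
  qed
  define I where "I x = chi - integral {x..1} G" for x
  have I_eq: "lower_int G x = ennreal (I x) \<and> 0 \<le> I x" if "x \<le> 1" for x
  proof -
    have e: "ennreal chi = lower_int G x + ennreal (integral {x..1} G)" using A[OF that] chiE by simp
    show ?thesis
    proof (cases "lower_int G x" rule: ennreal_cases)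
      case (real r)
      hence "ennreal chi = ennreal (r + integral {x..1} G)" using e intG0 by (simp add: ennreal_plus)
      hence "chi = r + integral {x..1} G" using real intG0 chi1 by (subst (asm) ennreal_inj) auto
      thus ?thesis using real by (simp add: I_def)
    next
      case top
      thus ?thesis using e by simp
    qed
  qed
  have I_nn: "x \<le> 1 \<Longrightarrow> 0 \<le> I x" for x using I_eq by blast
  have I1: "I 1 = chi" by (simp add: I_def)
  have Itight: "I (x + 1) = exp s / s * G x" if "x \<le> 0" for x
  proof -
    have "ennreal (I (x+1)) = ennreal (exp s / s * G x)" using I_eq[of "x+1"] tight[OF that] that by simp
    thus ?thesis using I_nn[of "x+1"] that s nn[of x] by (subst (asm) ennreal_inj) auto
  qed
  have Idiff: "I b - I a = integral {a..b} G" if "a \<le> b" "b \<le> 1" for a b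
    using Henstock_Kurzweil_Integration.integral_combine[OF that intG] by (simp add: I_def)
  have Icont: "continuous_on {L..1} I" for L
    unfolding I_def by (intro continuous_intros indefinite_integral_continuous_1' intG)
  have Gcont: "continuous_on {L..0} G" for L
  proof -
    have "continuous_on {L..0} (\<lambda>x. I (x + 1) / (exp s / s))"
      by (intro continuous_intros continuous_on_compose2[OF Icont[of "L+1"]]) (use s in auto)
    thus ?thesis by (rule continuous_on_eq) (use Itight s in auto)
  qed
  have IDER: "(I has_real_derivative G x) (at x)" if "x < 0" for x
  proof -
    have d0: "((\<lambda>y. integral {y..0} G) has_real_derivative - G x) (at x within {x-1..0})"
      by (rule integral_has_real_derivative'[OF Gcont]) (use that in auto)
    have "x \<in> interior {x-1..0}" using that by (simp only: interior_atLeastAtMost_real) simp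
    hence d: "((\<lambda>y. integral {y..0} G) has_real_derivative - G x) (at x)"
      using d0 by (simp only: at_within_interior)
    have "((\<lambda>y. chi - integral {0..1} G - integral {y..0} G) has_real_derivative (0 - - G x)) (at x)"
      by (rule DERIV_diff[OF DERIV_const d])
    hence "((\<lambda>y. chi - integral {0..1} G - integral {y..0} G) has_real_derivative G x) (at x)" by simp
    thus ?thesis
    proof (rule has_field_derivative_transform_within_open[where S="{..<0}"])
      show "open {..<(0::real)}" by simp
      show "x \<in> {..<0}" using that by simp
      fix y :: real assume "y \<in> {..<0}"
      thus "chi - integral {0..1} G - integral {y..0} G = I y"
        using Henstock_Kurzweil_Integration.integral_combine[of y 0 1 G, OF _ _ intG] by (simp add: I_def)
    qed
  qed
  define u where "u x = exp (- s * x) * I x" for x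
  have ucont: "continuous_on {L..1} u" for L
    unfolding u_def by (intro continuous_intros Icont)
  have unn: "x \<le> 1 \<Longrightarrow> 0 \<le> u x" for x unfolding u_def using I_nn by simp
  have uder: "(u has_real_derivative s * (u (x+1) - u x)) (at x)" if "x < 0" for x
  proof -
    have "(u has_real_derivative (- s * exp (- s * x) * I x + exp (- s * x) * G x)) (at x)"
      unfolding u_def by (auto intro!: derivative_eq_intros IDER[OF that])
    moreover have "exp (- s * x) * G x = s * u (x+1)"
    proof -
      have "G x = s * exp (-s) * I (x+1)" using Itight[of x] that s by (simp add: field_simps exp_minus)
      moreover have "exp (- s * x) * exp (-s) = exp (- s * (x+1))" by (simp add: exp_add[symmetric] algebra_simps)
      ultimately show ?thesis unfolding u_def by (metis mult.commute mult.left_commute)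
    qed
    ultimately show ?thesis by (simp add: u_def algebra_simps)
  qed
  define h where "h a = s * integral {a-1..a} u - u (a-1)" for a
  have hconst: "h (t+1) = h 1" if "t \<le> 0" for t
  proof (cases "t = 0")
    case True thus ?thesis by simp
  next
    case False
    hence t: "t < 0" using that by simp
    define L where "L = t - 1"
    define V where "V y = integral {L..y} u" for y
    define k where "k y = s * (V y - V (y-1)) - u (y-1)" for y
    have hk: "h y = k y" if "y \<in> {t+1..1}" for y
    proof -
      have "integral {L..y} u = integral {L..y-1} u + integral {y-1..y} u"
        by (rule Henstock_Kurzweil_Integration.integral_combine[symmetric]) (use that in \<open>auto simp: L_def intro!: integrable_continuous_interval continuous_on_subset[OF ucont[of "t-1"]]\<close>)
      thus ?thesis by (simp add: h_def k_def V_def algebra_simps)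
    qed
    have Vcont: "continuous_on {L..1} V"
      unfolding V_def by (rule indefinite_integral_continuous_1) (auto intro!: integrable_continuous_interval ucont)
    have Vder: "(V has_real_derivative u y) (at y)" if "L < y" "y < 1" for y
    proof -
      have d0: "(V has_real_derivative u y) (at y within {L..1})"
        unfolding V_def by (rule integral_has_real_derivative[OF ucont]) (use that in auto)
      have "y \<in> interior {L..1}" using that by (simp only: interior_atLeastAtMost_real) simp
      thus ?thesis using d0 by (simp only: at_within_interior)
    qed
    have "k 1 = k (t+1)"
    proof (rule DERIV_isconst_end[of "t+1" 1 k])
      show "t + 1 < 1" using t by simp
      show "continuous_on {t+1..1} k"
        unfolding k_def
        by (intro continuous_intros continuous_on_compose2[OF Vcont] continuous_on_compose2[OF ucont[of L]]
            continuous_on_subset[OF Vcont]) (auto simp: L_def)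
      fix y assume y: "t + 1 < y" "y < 1"
      have d1: "(V has_real_derivative u y) (at y)" using Vder y by (simp add: L_def)
      have g: "((\<lambda>z. z - 1) has_real_derivative 1) (at y)" by (auto intro!: derivative_eq_intros)
      have v1: "(V has_real_derivative u (y-1)) (at (y-1))" using Vder[of "y-1"] y t by (simp add: L_def)
      have u1: "(u has_real_derivative s * (u (y-1+1) - u (y-1))) (at (y-1))" using uder[of "y-1"] y by simp
      have d2: "((\<lambda>y. V (y-1)) has_real_derivative u (y-1)) (at y)"
        using DERIV_chain2[of V "u (y-1)" "\<lambda>z. z - 1" y 1 UNIV] v1 g by simp
      have d3: "((\<lambda>y. u (y-1)) has_real_derivative s * (u y - u (y-1))) (at y)"
        using DERIV_chain2[of u "s * (u (y-1+1) - u (y-1))" "\<lambda>z. z - 1" y 1 UNIV] u1 g by simp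
      have "(k has_real_derivative s * (u y - u (y-1)) - s * (u y - u (y-1))) (at y)"
        unfolding k_def by (rule DERIV_diff[OF DERIV_cmult[OF DERIV_diff[OF d1 d2]] d3])
      thus "(k has_real_derivative 0) (at y)" by simp
    qed
    thus ?thesis using hk[of 1] hk[of "t+1"] that t by simp
  qed
  have rel: "s * integral {t..t+1} u = u t + h 1" if "t \<le> 0" for t
    using hconst[OF that] by (simp add: h_def)
  have h1: "h 1 \<le> 0"
    by (rule key_contra[OF s ucont unn rel])
  define \<Phi> where "\<Phi> x = integral {0..x} G" for x
  define W where "W = integral {0..1} (\<lambda>x. s * exp (-s*x) * integral {0..x} G) + exp (-s) * integral {0..1} G"
  define T where "T = (LINT x:{0<..1}|lborel. exp (- s * x) * \<phi> x)"
  have T1: "T = (LINT x:{0<..1}|lborel. exp (- s * x) * G x)"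
    unfolding T_def by (rule set_lebesgue_integral_cong) (use ind in auto)
  also have "\<dots> = integral\<^sup>L lborel (\<lambda>x. indicator {0<..1} x *\<^sub>R (exp (- s * x) * G x))"
    by (simp add: set_lebesgue_integral_def)
  also have "\<dots> = enn2real (\<integral>\<^sup>+x. ennreal (indicator {0<..1} x *\<^sub>R (exp (- s * x) * G x)) \<partial>lborel)"
    by (rule integral_eq_nn_integral) (use nn in \<open>auto simp: indicator_def\<close>)
  also have "(\<integral>\<^sup>+x. ennreal (indicator {0<..1} x *\<^sub>R (exp (- s * x) * G x)) \<partial>lborel)
      = (\<integral>\<^sup>+x. ennreal (exp (-s*x) * G x) * indicator {0<..1} x \<partial>lborel)"
    by (rule nn_integral_cong) (simp add: indicator_def)
  also have "\<dots> = ennreal W" unfolding W_def by (rule fub[OF mono nn s(1)])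
  finally have TW: "T = enn2real (ennreal W)" .
  have contPhi: "continuous_on {0..1} \<Phi>"
    unfolding \<Phi>_def by (rule indefinite_integral_continuous_1[OF intG])
  have Q: "((\<lambda>x. exp (-s*x) * \<Phi> x) has_integral integral {0..1} (\<lambda>x. exp (-s*x) * \<Phi> x)) {0..1}"
    by (rule integrable_integral, rule integrable_continuous_interval) (intro continuous_intros contPhi)
  have P1: "((\<lambda>x. exp (-s*x)) has_integral ((1 - exp (-s)) / s)) {0..1}"
  proof -
    have "((\<lambda>x. exp (-s*x)) has_integral ((\<lambda>x. - exp (-s*x) / s) 1 - (\<lambda>x. - exp (-s*x) / s) 0)) {0..1}"
      by (rule fundamental_theorem_of_calculus)
         (use s in \<open>auto intro!: derivative_eq_intros simp: has_real_derivative_iff_has_vector_derivative[symmetric]\<close>)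
    thus ?thesis by (simp add: diff_divide_distrib)
  qed
  have Iphi: "I x = I 0 + \<Phi> x" if "x \<in> {0..1}" for x
  proof -
    have "I x - I 0 = integral {0..x} G" using that by (intro Idiff) auto
    thus ?thesis unfolding \<Phi>_def by linarith
  qed
  have "((\<lambda>x. exp (-s*x) * I 0 + exp (-s*x) * \<Phi> x) has_integral
          ((1 - exp (-s)) / s * I 0 + integral {0..1} (\<lambda>x. exp (-s*x) * \<Phi> x))) {0..1}"
    by (rule has_integral_add[OF has_integral_mult_left[OF P1] Q])
  hence "(u has_integral ((1 - exp (-s)) / s * I 0 + integral {0..1} (\<lambda>x. exp (-s*x) * \<Phi> x))) {0..1}"
  proof (rule has_integral_eq[rotated])
    fix x :: real assume "x \<in> {0..1}"
    hence "u x = exp (-s*x) * (I 0 + \<Phi> x)" unfolding u_def by (subst Iphi) auto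
    thus "exp (-s*x) * I 0 + exp (-s*x) * \<Phi> x = u x" by (simp add: distrib_left)
  qed
  hence iu: "integral {0..1} u = (1 - exp (-s)) / s * I 0 + integral {0..1} (\<lambda>x. exp (-s*x) * \<Phi> x)"
    by (rule integral_unique)
  have "((\<lambda>x. s * (exp (-s*x) * \<Phi> x)) has_integral s * integral {0..1} (\<lambda>x. exp (-s*x) * \<Phi> x)) {0..1}"
    by (rule has_integral_mult_right[OF Q])
  hence iP: "integral {0..1} (\<lambda>x. s * exp (-s*x) * integral {0..x} G) = s * integral {0..1} (\<lambda>x. exp (-s*x) * \<Phi> x)"
    by (intro integral_unique) (simp add: \<Phi>_def mult.assoc)
  have chiI: "chi = I 0 + \<Phi> 1" using Iphi[of 1] I1 by simp
  define \<Psi> where "\<Psi> = integral {0..1} (\<lambda>x. exp (-s*x) * \<Phi> x)"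
  have "h 1 = s * integral {0..1} u - u 0" by (simp add: h_def)
  also have "\<dots> = s * ((1 - exp (-s)) / s * I 0) + s * \<Psi> - I 0"
    unfolding iu \<Psi>_def by (simp add: u_def distrib_left)
  also have "s * ((1 - exp (-s)) / s * I 0) = I 0 - exp (-s) * I 0" using s by (simp add: field_simps)
  finally have hh: "h 1 = I 0 - exp (-s) * I 0 + s * \<Psi> - I 0" .
  have WW: "W = s * \<Psi> + exp (-s) * \<Phi> 1" unfolding W_def iP \<Psi>_def by (simp add: \<Phi>_def)
  have "exp (-s) * chi = exp (-s) * I 0 + exp (-s) * \<Phi> 1" unfolding chiI by (simp add: distrib_left)
  hence "W = h 1 + exp (-s) * chi" using hh WW by linarith
  hence "W \<le> exp (-s) * chi" using h1 by simp
  moreover have "0 \<le> exp (-s) * chi" using chi1 by simp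
  ultimately have "T \<le> exp (-s) * chi" unfolding TW
    by (cases "W \<ge> 0") (auto simp: enn2real_ennreal ennreal_neg)
  hence "exp s * T \<le> exp s * (exp (-s) * chi)" by simp
  also have "\<dots> = chi" by (simp add: exp_minus field_simps)
  finally show ?thesis by (simp add: T_def)
qed

end
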